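(* Let $C=(C_1,C_2)$ be an equitable partition of $J(n,w)$ with quotient matrix $\begin{pmatrix} a & b\\ c& d\end{pmatrix}$, where $b+c>0$, and let $f=\chi_{C_1}$. Then $$\frac{bc}{b+c}\binom{n}{w}=\sum_{1\le i<j\le n}|S(f_{i,j})|,$$ where $S(f_{i,j})$ denotes the support (set of nonzeros) of the partial difference $f_{i,j}$.
   Context: The Johnson graph $J(n,w)$ has as vertices the binary vectors of length $n$ with exactly $w$ ones; two vertices are adjacent iff they have exactly $w-1$ common ones. An equitable partition $(C_1,C_2)$ with quotient matrix $(s_{ij})$: every vertex of $C_i$ has exactly $s_{ij}$ neighbours in $C_j$. $\chi_{C_1}$ is the characteristic function of $C_1$. For $f:J(n,w)\to\mathbb{R}$ and $i<j$, the partial difference $f_{i,j}:J(n-2,w-1)\to\mathbb{R}$ is $f_{i,j}(y)=f(y^{(1,0)})-f(y^{(0,1)})$, where $y$ is indexed by $\{1,\dots,n\}\setminus\{i,j\}$ and $y^{(a,b)}$ is obtained by inserting $a$ at position $i$ and $b$ at position $j$. *)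

theory Defs
  imports Complex_Main
begin

text \<open>A binary vector of length n with exactly w ones is identified with the set
  of positions (a subset of {1..n}) carrying a one.\<close>

definition johnson_vertices :: "nat \<Rightarrow> nat \<Rightarrow> nat set set" where
  "johnson_vertices n w = {x. x \<subseteq> {1..n} \<and> card x = w}"

definition johnson_adj :: "nat \<Rightarrow> nat set \<Rightarrow> nat set \<Rightarrow> bool" where
  "johnson_adj w x y \<longleftrightarrow> card (x \<inter> y) + 1 = w"

definition equitable_partition2 ::
  "nat \<Rightarrow> nat \<Rightarrow> nat set set \<Rightarrow> nat set set \<Rightarrow> nat \<Rightarrow> nat \<Rightarrow> nat \<Rightarrow> nat \<Rightarrow> bool" where
  "equitable_partition2 n w C1 C2 a b c d \<longleftrightarrow>
     C1 \<noteq> {} \<and> C2 \<noteq> {} \<and> C1 \<inter> C2 = {} \<and> C1 \<union> C2 = johnson_vertices n w \<and>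
     (\<forall>x\<in>C1. card {y\<in>C1. johnson_adj w x y} = a \<and> card {y\<in>C2. johnson_adj w x y} = b) \<and>
     (\<forall>x\<in>C2. card {y\<in>C1. johnson_adj w x y} = c \<and> card {y\<in>C2. johnson_adj w x y} = d)"

definition char_fun :: "nat set set \<Rightarrow> nat set \<Rightarrow> real" where
  "char_fun C x = (if x \<in> C then 1 else 0)"

text \<open>Partial difference f_{i,j}: a function on J(n-2,w-1), whose vertices are the
  (w-1)-subsets y of {1..n} - {i,j}; y^(1,0) = insert i y, y^(0,1) = insert j y.\<close>
definition partial_diff :: "(nat set \<Rightarrow> real) \<Rightarrow> nat \<Rightarrow> nat \<Rightarrow> nat set \<Rightarrow> real" where
  "partial_diff f i j y = f (insert i y) - f (insert j y)"

definition partial_diff_domain :: "nat \<Rightarrow> nat \<Rightarrow> nat \<Rightarrow> nat \<Rightarrow> nat set set" where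
  "partial_diff_domain n w i j = {y. y \<subseteq> {1..n} - {i, j} \<and> card y = w - 1}"

definition diff_support :: "nat \<Rightarrow> nat \<Rightarrow> (nat set \<Rightarrow> real) \<Rightarrow> nat \<Rightarrow> nat \<Rightarrow> nat set set" where
  "diff_support n w f i j = {y \<in> partial_diff_domain n w i j. partial_diff f i j y \<noteq> 0}"

end

theory Submission
  imports Defs
begin

theorem lemma4:
  fixes n w a b c d :: nat and C1 C2 :: "nat set set"
  assumes "equitable_partition2 n w C1 C2 a b c d"
    and "b + c > 0"
  shows "real b * real c / (real b + real c) * real (n choose w) =
         (\<Sum>(i, j) \<in> {(i, j). 1 \<le> i \<and> i < j \<and> j \<le> n}.
            real (card (diff_support n w (char_fun C1) i j)))"
proof -
  note ep = assms(1)[unfolded equitable_partition2_def]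
  define V where "V = johnson_vertices n w"
  have finV: "finite V" unfolding V_def johnson_vertices_def
    by (rule finite_subset[of _ "Pow {1..n}"]) auto
  have cardV: "card V = n choose w" unfolding V_def johnson_vertices_def
    using n_subsets[of "{1..n}" w] by simp
  have C1V: "C1 \<subseteq> V" and C2V: "C2 \<subseteq> V" using ep V_def by auto
  have fin1: "finite C1" and fin2: "finite C2" using C1V C2V finV finite_subset by auto
  have disj: "C1 \<inter> C2 = {}" and un: "C1 \<union> C2 = V" using ep V_def by auto
  have w1: "w \<ge> 1"
  proof (rule ccontr)
    assume "\<not> w \<ge> 1"
    hence "w = 0" by simp
    obtain x1 where "x1 \<in> C1" using ep by blast
    obtain x2 where "x2 \<in> C2" using ep by blast
    have "x1 = {}"
    proof -
      have "x1 \<subseteq> {1..n}" "card x1 = 0" using \<open>x1 \<in> C1\<close> C1V \<open>w = 0\<close> unfolding V_def johnson_vertices_def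
        by auto
      thus ?thesis using finite_subset[OF _ finite_atLeastAtMost] by (metis card_0_eq)
    qed
    moreover have "x2 = {}"
    proof -
      have "x2 \<subseteq> {1..n}" "card x2 = 0" using \<open>x2 \<in> C2\<close> C2V \<open>w = 0\<close> unfolding V_def johnson_vertices_def
        by auto
      thus ?thesis using finite_subset[OF _ finite_atLeastAtMost] by (metis card_0_eq)
    qed
    ultimately show False using \<open>x1 \<in> C1\<close> \<open>x2 \<in> C2\<close> disj by auto
  qed
  define E where "E = Sigma C1 (\<lambda>x. {x'\<in>C2. johnson_adj w x x'})"
  have finE: "finite E" unfolding E_def using fin1 fin2 by auto
  have E1: "card E = card C1 * b" unfolding E_def
    using ep fin1 fin2 by (subst card_SigmaI) auto
  have adjsym: "johnson_adj w x y = johnson_adj w y x" for x y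
    unfolding johnson_adj_def by (simp add: Int_commute)
  have "card E = card (Sigma C2 (\<lambda>x'. {x\<in>C1. johnson_adj w x' x}))"
  proof (rule bij_betw_same_card[of "\<lambda>(x,x'). (x',x)"])
    show "bij_betw (\<lambda>(x, x'). (x', x)) E (SIGMA x':C2. {x \<in> C1. johnson_adj w x' x})"
      unfolding E_def bij_betw_def inj_on_def using adjsym by auto
  qed
  also have "\<dots> = card C2 * c" using ep fin1 fin2 by (subst card_SigmaI) auto
  finally have E2: "card E = card C2 * c" .
  define P where "P = {(i, j). 1 \<le> i \<and> i < j \<and> j \<le> (n::nat)}"
  define D where "D = (\<lambda>p. diff_support n w (char_fun C1) (fst p) (snd p))"
  have finP: "finite P" unfolding P_def
    by (rule finite_subset[of _ "{1..n} \<times> {1..n}"]) auto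
  have finD: "finite (D p)" for p unfolding D_def diff_support_def partial_diff_domain_def
    by (rule finite_subset[of _ "Pow {1..n}"]) auto
  define h where "h = (\<lambda>(p::nat\<times>nat, y::nat set).
     if insert (fst p) y \<in> C1 then (insert (fst p) y, insert (snd p) y)
     else (insert (snd p) y, insert (fst p) y))"
  have "bij_betw h (Sigma P D) E"
  proof -
    have key: "insert i y \<inter> insert j y = y \<and> (insert i y \<union> insert j y) - y = {i, j}"
      if "i \<notin> y" "j \<notin> y" "i \<noteq> j" for i j :: nat and y
      using that by auto
    have inj: "inj_on h (Sigma P D)"
    proof (rule inj_onI)
      fix u v assume u: "u \<in> Sigma P D" and v: "v \<in> Sigma P D" and huv: "h u = h v"
      obtain i j y where u': "u = ((i,j),y)" by (metis prod.exhaust)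
      obtain i' j' y' where v': "v = ((i',j'),y')" by (metis prod.exhaust)
      have iy: "i \<notin> y" "j \<notin> y" "i < j" using u u' unfolding P_def D_def diff_support_def
          partial_diff_domain_def by auto
      have iy': "i' \<notin> y'" "j' \<notin> y'" "i' < j'" using v v' unfolding P_def D_def diff_support_def
          partial_diff_domain_def by auto
      obtain X X' where hu: "h u = (X, X')" by (metis prod.exhaust)
      have A: "X \<inter> X' = y \<and> (X \<union> X') - y = {i, j}"
        using hu key[of i y j] iy u' unfolding h_def by (auto split: if_splits)
      have B: "X \<inter> X' = y' \<and> (X \<union> X') - y' = {i', j'}"
        using hu huv key[of i' y' j'] iy' v' unfolding h_def by (auto split: if_splits)
      have "y = y'" using A B by simp
      moreover have "{i,j} = {i',j'}" using A B by simp
      hence "i = i' \<and> j = j'" using iy(3) iy'(3)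
        by (metis doubleton_eq_iff less_asym)
      ultimately show "u = v" using u' v' by simp
    qed
    have sub: "h ` Sigma P D \<subseteq> E"
    proof
      fix z assume "z \<in> h ` Sigma P D"
      then obtain i j y where m: "((i,j),y) \<in> Sigma P D" and z: "z = h ((i,j),y)" by auto
      have iy: "i \<notin> y" "j \<notin> y" "i < j" "1 \<le> i" "j \<le> n" "y \<subseteq> {1..n}" "card y = w - 1"
        and nz: "char_fun C1 (insert i y) \<noteq> char_fun C1 (insert j y)"
        using m unfolding P_def D_def diff_support_def partial_diff_domain_def partial_diff_def
        by auto
      have finy: "finite y" using iy(6) finite_subset by blast
      have Vi: "insert i y \<in> V" using iy finy w1 unfolding V_def johnson_vertices_def by auto
      have Vj: "insert j y \<in> V" using iy finy w1 unfolding V_def johnson_vertices_def by auto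
      have adj: "johnson_adj w (insert i y) (insert j y)" "johnson_adj w (insert j y) (insert i y)"
        unfolding johnson_adj_def using key[of i y j] iy w1 by (auto simp: Int_commute)
      show "z \<in> E"
      proof (cases "insert i y \<in> C1")
        case True
        hence "insert j y \<notin> C1" using nz unfolding char_fun_def by auto
        hence "insert j y \<in> C2" using Vj un by auto
        thus ?thesis using True z adj unfolding h_def E_def by auto
      next
        case False
        hence "insert j y \<in> C1" using nz unfolding char_fun_def by (auto split: if_splits)
        moreover have "insert i y \<in> C2" using Vi un False by auto
        ultimately show ?thesis using False z adj unfolding h_def E_def by auto
      qed
    qed
    have sup: "E \<subseteq> h ` Sigma P D"
    proof
      fix z assume "z \<in> E"
      then obtain x x' where z: "z = (x,x')" and x: "x \<in> C1" and x': "x' \<in> C2"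
        and adj: "card (x \<inter> x') + 1 = w" unfolding E_def johnson_adj_def by auto
      have xv: "x \<subseteq> {1..n}" "card x = w" using x C1V unfolding V_def johnson_vertices_def by auto
      have xv': "x' \<subseteq> {1..n}" "card x' = w" using x' C2V unfolding V_def johnson_vertices_def by auto
      have fx: "finite x" "finite x'" using xv xv' finite_subset by auto
      define y where "y = x \<inter> x'"
      have "card (x - y) = card x - card y" using fx by (intro card_Diff_subset) (auto simp: y_def)
      hence "card (x - y) = 1" using adj xv by (simp add: y_def)
      then obtain p where p: "x - y = {p}" using card_1_singletonE by blast
      have "card (x' - y) = card x' - card y" using fx by (intro card_Diff_subset) (auto simp: y_def)
      hence "card (x' - y) = 1" using adj xv' by (simp add: y_def)
      then obtain q where q: "x' - y = {q}" using card_1_singletonE by blast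
      have xe: "x = insert p y" using p unfolding y_def by blast
      have xe': "x' = insert q y" using q unfolding y_def by blast
      have pq: "p \<noteq> q" "p \<notin> y" "q \<notin> y" using p q unfolding y_def by auto
      have fy: "finite y" using fx unfolding y_def by auto
      have cy: "card y = w - 1" using adj unfolding y_def by simp
      have pn: "p \<in> {1..n}" "q \<in> {1..n}" "y \<subseteq> {1..n}" using xe xe' xv xv' by auto
      have ne: "char_fun C1 x \<noteq> char_fun C1 x'" using x x' disj unfolding char_fun_def by auto
      show "z \<in> h ` Sigma P D"
      proof (cases "p < q")
        case True
        have "((p,q),y) \<in> Sigma P D" using True pq pn cy ne xe xe'
          unfolding P_def D_def diff_support_def partial_diff_domain_def partial_diff_def by auto
        moreover have "h ((p,q),y) = z" using z x xe xe' unfolding h_def by simp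
        ultimately show ?thesis by force
      next
        case False
        hence qp: "q < p" using pq by simp
        have "((q,p),y) \<in> Sigma P D" using qp pq pn cy ne xe xe'
          unfolding P_def D_def diff_support_def partial_diff_domain_def partial_diff_def by auto
        moreover have "h ((q,p),y) = z" using z x x' disj xe xe' unfolding h_def by auto
        ultimately show ?thesis by force
      qed
    qed
    show ?thesis unfolding bij_betw_def using inj sub sup by blast
  qed
  hence "card E = card (Sigma P D)" by (simp add: bij_betw_same_card)
  also have "\<dots> = (\<Sum>p\<in>P. card (D p))" using finP finD by (simp add: card_SigmaI)
  finally have Es: "real (card E) = (\<Sum>p\<in>P. real (card (D p)))" by simp
  have rhs: "(\<Sum>(i, j) \<in> {(i, j). 1 \<le> i \<and> i < j \<and> j \<le> n}.
            real (card (diff_support n w (char_fun C1) i j))) = (\<Sum>p\<in>P. real (card (D p)))"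
    unfolding P_def D_def by (rule sum.cong) auto
  have c1: "card C1 > 0" "card C2 > 0" using ep fin1 fin2 by (auto simp: card_gt_0_iff)
  have bc: "b > 0" "c > 0" using E1 E2 c1 assms(2) by (auto, metis mult_is_0 neq0_conv)+
  have N: "card V = card C1 + card C2" using un disj fin1 fin2 card_Un_disjoint by metis
  have e1: "real (card E) = real (card C1) * b" "real (card E) = real (card C2) * c"
    using E1 E2 by (metis of_nat_mult)+
  have "real b * real c / (real b + real c) * real (n choose w)
      = real b * real c * (real (card C1) + real (card C2)) / (real b + real c)"
    using cardV N by simp
  also have "\<dots> = real (card E)"
  proof -
    have "real b * real c * (real (card C1) + real (card C2))
        = real c * (real (card C1) * real b) + real b * (real (card C2) * real c)"
      by (simp add: algebra_simps)
    also have "\<dots> = (real b + real c) * real (card E)" using e1 by (simp add: algebra_simps)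
    finally show ?thesis using bc by simp
  qed
  finally show ?thesis using rhs Es by simp
qed

end
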